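(* Let $(E,C)$ be a separated graph, $S\subseteq C_{fin}$, and $K$ a field. For each $X\in C$ let $A_X$ be the $K$-algebra defined in the context, let $A$ be the free product of the $K$-algebras $\{A_X\}_{X\in C}$, and let $I$ be the two-sided ideal of $A$ generated by $\{v_X-v_Y: X,Y\in C,\ v\in E^0\}$. Then $L_K(E,C,S)$ is $K$-isomorphic to the amalgamated free product $A/I$, via an isomorphism sending $e\mapsto[e]$, $e^*\mapsto[e^*]$ for $e\in E^1$ and $v\mapsto[v_X]$ for $v\in E^0$ (any $X\in C$).
   Context: A separated graph is a pair $(E,C)$ where $E=(E^0,E^1,r,s)$ is a directed graph and $C=\bigcup_{v\in E^0}C_v$, where for each non-sink $v$, $C_v$ is a partition of $s^{-1}(v)$ into pairwise disjoint nonempty sets; $C_{fin}$ is the set of finite $Y\in C$. The Cohn-Leavitt algebra $L_K(E,C,S)$ is the universal $K$-algebra generated by pairwise orthogonal idempotents $\{v:v\in E^0\}$ and elements $\{e,e^*:e\in E^1\}$ subject to: $s(e)e=er(e)=e$; $r(e)e^*=e^*s(e)=e^*$; $e^*f=\delta_{e,f}r(e)$ for $e,f\in Y$, $Y\in C$; $v=\sum_{e\in X}ee^*$ for every $X\in S\cap C_v$, $v$ non-sink. For $X\in C$, let $E_X^0=\{v_X:v\in E^0\}$ be a copy of $E^0$, and let $A_X$ be the universal $K$-algebra generated by $E_X^0\cup\{e,e^*:e\in X\}$ subject to: the elements of $E_X^0$ are pairwise orthogonal idempotents; $e\,r(e)_X=e=s(e)_X\,e$ and $r(e)_X e^*=e^*=e^*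 s(e)_X$ for $e\in X$; $e^*f=\delta_{e,f}r(e)_X$ for $e,f\in X$; and, if $X\in S$, $v_X=\sum_{e\in X}ee^*$ where $v$ is the common source of the edges in $X$ (i.e. $X\in C_v$). $[a]$ denotes the class in $A/I$ of $a\in A$. *)

theory Defs
  imports "HOL-Library.Poly_Mapping"
begin

datatype 'g word = Word "'g list"

fun letters :: "'g word \<Rightarrow> 'g list" where "letters (Word xs) = xs"

instantiation word :: (type) monoid_add
begin
definition zero_word :: "'g word" where "zero_word = Word []"
fun plus_word :: "'g word \<Rightarrow> 'g word \<Rightarrow> 'g word" where
  "plus_word (Word xs) (Word ys) = Word (xs @ ys)"
instance
proof
  fix a b c :: "'g word"
  show "a + b + c = a + (b + c)" by (cases a; cases b; cases c) simp
  show "0 + a = a" by (cases a) (simp add: zero_word_def)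
  show "a + 0 = a" by (cases a) (simp add: zero_word_def)
qed
end

text \<open>The free unital K-algebra on the generator type 'g: finitely supported
  K-linear combinations of words, with concatenation product.\<close>
type_synonym ('g,'k) freealg = "('g word, 'k) poly_mapping"

definition gen :: "'g \<Rightarrow> ('g,'k::semiring_1) freealg" where
  "gen g = Poly_Mapping.single (Word [g]) 1"

definition scal :: "'k::semiring_1 \<Rightarrow> ('g,'k) freealg" where
  "scal c = Poly_Mapping.single (Word []) c"

text \<open>Elements involving only generators from G (the free algebra on G).\<close>
definition over :: "'g set \<Rightarrow> ('g,'k::zero) freealg \<Rightarrow> bool" where
  "over G p \<longleftrightarrow> (\<forall>w\<in>Poly_Mapping.keys p. set (letters w) \<subseteq> G)"

text \<open>Elements with zero constant term: the free non-unital algebra.\<close>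
definition nonunital :: "('g,'k::zero) freealg \<Rightarrow> bool" where
  "nonunital p \<longleftrightarrow> Poly_Mapping.lookup p (Word []) = 0"

inductive_set gideal :: "'g set \<Rightarrow> ('g,'k::ring_1) freealg set \<Rightarrow> ('g,'k) freealg set"
  for G R where
  zero: "0 \<in> gideal G R"
| gen: "r \<in> R \<Longrightarrow> over G a \<Longrightarrow> over G b \<Longrightarrow> a * r * b \<in> gideal G R"
| add: "x \<in> gideal G R \<Longrightarrow> y \<in> gideal G R \<Longrightarrow> x + y \<in> gideal G R"

text \<open>Universal non-unital K-algebra \<open>\<langle>G | R\<rangle>\<close> is
  \<open>{p. over G p \<and> nonunital p} / gideal G R\<close>.  A K-algebra isomorphism between
  two such presented algebras, given by a lift \<Phi> on representatives:\<close>
definition pres_iso ::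
  "'g set \<Rightarrow> ('g,'k::field) freealg set \<Rightarrow> 'h set \<Rightarrow> ('h,'k) freealg set
   \<Rightarrow> (('g,'k) freealg \<Rightarrow> ('h,'k) freealg) \<Rightarrow> bool" where
  "pres_iso G R H Q \<Phi> \<longleftrightarrow>
     (\<forall>x. over G x \<and> nonunital x \<longrightarrow> over H (\<Phi> x) \<and> nonunital (\<Phi> x)) \<and>
     (\<forall>x y. over G x \<and> nonunital x \<and> over G y \<and> nonunital y \<longrightarrow>
        \<Phi> (x + y) = \<Phi> x + \<Phi> y \<and>
        \<Phi> (x * y) - \<Phi> x * \<Phi> y \<in> gideal H Q) \<and>
     (\<forall>c x. over G x \<and> nonunital x \<longrightarrow> \<Phi> (scal c * x) = scal c * \<Phi> x) \<and>
     (\<forall>x. over G x \<and> nonunital x \<longrightarrow> (x \<in> gideal G R \<longleftrightarrow> \<Phi> x \<in> gideal H Q)) \<and>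
     (\<forall>y. over H y \<and> nonunital y \<longrightarrow>
        (\<exists>x. over G x \<and> nonunital x \<and> \<Phi> x - y \<in> gideal H Q))"

text \<open>Graph with vertex set V, edge set Ed, source s, range r; C a set of sets of
  edges such that for each vertex v, \<open>C_v = {X\<in>C. X \<subseteq> s\<inverse>(v)}\<close> partitions
  \<open>s\<inverse>(v)\<close> into nonempty sets (empty for sinks).\<close>
definition Cv :: "('e \<Rightarrow> 'v) \<Rightarrow> 'e set set \<Rightarrow> 'v \<Rightarrow> 'e set set" where
  "Cv s C v = {X\<in>C. X \<noteq> {} \<and> (\<forall>e\<in>X. s e = v)}"

definition separated_graph ::
  "'v set \<Rightarrow> 'e set \<Rightarrow> ('e \<Rightarrow> 'v) \<Rightarrow> ('e \<Rightarrow> 'v) \<Rightarrow> 'e set set \<Rightarrow> bool" where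
  "separated_graph V Ed s r C \<longleftrightarrow>
     (\<forall>e\<in>Ed. s e \<in> V \<and> r e \<in> V) \<and>
     C = (\<Union>v\<in>V. Cv s C v) \<and>
     (\<forall>v\<in>V. (\<forall>X\<in>Cv s C v. \<forall>Y\<in>Cv s C v. X \<noteq> Y \<longrightarrow> X \<inter> Y = {}) \<and>
             \<Union>(Cv s C v) = {e\<in>Ed. s e = v})"

datatype ('v,'e) lgen = LV 'v | LE 'e | LS 'e   \<comment> \<open>v, e, e*\<close>

definition L_gens :: "'v set \<Rightarrow> 'e set \<Rightarrow> ('v,'e) lgen set" where
  "L_gens V Ed = LV ` V \<union> LE ` Ed \<union> LS ` Ed"

definition L_rels :: "'v set \<Rightarrow> 'e set \<Rightarrow> ('e \<Rightarrow> 'v) \<Rightarrow> ('e \<Rightarrow> 'v) \<Rightarrow> 'e set set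
    \<Rightarrow> 'e set set \<Rightarrow> (('v,'e) lgen,'k::field) freealg set" where
  "L_rels V Ed s r C S =
     {gen (LV v) * gen (LV w) - (if v = w then gen (LV v) else 0) | v w. v \<in> V \<and> w \<in> V}
   \<union> {gen (LV (s e)) * gen (LE e) - gen (LE e) | e. e \<in> Ed}
   \<union> {gen (LE e) * gen (LV (r e)) - gen (LE e) | e. e \<in> Ed}
   \<union> {gen (LV (r e)) * gen (LS e) - gen (LS e) | e. e \<in> Ed}
   \<union> {gen (LS e) * gen (LV (s e)) - gen (LS e) | e. e \<in> Ed}
   \<union> {gen (LS e) * gen (LE f) - (if e = f then gen (LV (r e)) else 0) | e f Y.
        Y \<in> C \<and> e \<in> Y \<and> f \<in> Y}
   \<union> {gen (LV v) - (\<Sum>e\<in>X. gen (LE e) * gen (LS e)) | v X.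
        v \<in> V \<and> X \<in> S \<and> X \<in> Cv s C v}"

datatype ('v,'e) agen = AV "'e set" 'v | AE 'e | AS 'e   \<comment> \<open>v_X, e, e* (e \<in> X)\<close>

definition AX_gens :: "'v set \<Rightarrow> 'e set \<Rightarrow> ('v,'e) agen set" where
  "AX_gens V X = (\<lambda>v. AV X v) ` V \<union> AE ` X \<union> AS ` X"

definition AX_rels :: "'v set \<Rightarrow> ('e \<Rightarrow> 'v) \<Rightarrow> ('e \<Rightarrow> 'v) \<Rightarrow> 'e set set \<Rightarrow> 'e set
    \<Rightarrow> (('v,'e) agen,'k::field) freealg set" where
  "AX_rels V s r S X =
     {gen (AV X v) * gen (AV X w) - (if v = w then gen (AV X v) else 0) | v w. v \<in> V \<and> w \<in> V}
   \<union> {gen (AE e) * gen (AV X (r e)) - gen (AE e) | e. e \<in> X}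
   \<union> {gen (AV X (s e)) * gen (AE e) - gen (AE e) | e. e \<in> X}
   \<union> {gen (AV X (r e)) * gen (AS e) - gen (AS e) | e. e \<in> X}
   \<union> {gen (AS e) * gen (AV X (s e)) - gen (AS e) | e. e \<in> X}
   \<union> {gen (AS e) * gen (AE f) - (if e = f then gen (AV X (r e)) else 0) | e f.
        e \<in> X \<and> f \<in> X}
   \<union> {gen (AV X v) - (\<Sum>e\<in>X. gen (AE e) * gen (AS e)) | v.
        X \<in> S \<and> (\<forall>e\<in>X. s e = v)}"

text \<open>The free product A of the A_X (X \<in> C): generators the disjoint union of
  the generators of the A_X, relations the union of their relations.\<close>
definition A_gens :: "'v set \<Rightarrow> 'e set set \<Rightarrow> ('v,'e) agen set" where
  "A_gens V C = (\<Union>X\<in>C. AX_gens V X)"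

definition A_rels :: "'v set \<Rightarrow> ('e \<Rightarrow> 'v) \<Rightarrow> ('e \<Rightarrow> 'v) \<Rightarrow> 'e set set \<Rightarrow> 'e set set
    \<Rightarrow> (('v,'e) agen,'k::field) freealg set" where
  "A_rels V s r C S = (\<Union>X\<in>C. AX_rels V s r S X)"

definition I_gens :: "'v set \<Rightarrow> 'e set set \<Rightarrow> (('v,'e) agen,'k::field) freealg set" where
  "I_gens V C = {gen (AV X v) - gen (AV Y v) | X Y v. X \<in> C \<and> Y \<in> C \<and> v \<in> V}"

end

theory Submission imports Defs begin

lemma word0: "Word [] = 0" by (simp add: zero_word_def)

lemma pm_expand: "p = (\<Sum>w\<in>Poly_Mapping.keys p. Poly_Mapping.single w (Poly_Mapping.lookup p w))"
  for p :: "'a \<Rightarrow>\<^sub>0 'b::comm_monoid_add"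
  by (rule poly_mapping_eqI) (simp add: lookup_sum lookup_single when_def in_keys_iff)

lemma pm_induct[consumes 0, case_names zero single add]:
  assumes "P 0" "\<And>w c. w \<in> Poly_Mapping.keys p \<Longrightarrow> P (Poly_Mapping.single w c)"
    "\<And>a b. P a \<Longrightarrow> P b \<Longrightarrow> P (a + b)"
  shows "P (p :: 'a \<Rightarrow>\<^sub>0 'b::comm_monoid_add)"
proof -
  have "P (\<Sum>w\<in>I. Poly_Mapping.single w (Poly_Mapping.lookup p w))"
    if "finite I" "I \<subseteq> Poly_Mapping.keys p" for I
    using that
  proof (induction I rule: finite_induct)
    case empty then show ?case using assms(1) by simp
  next
    case (insert x F)
    then have x: "x \<in> Poly_Mapping.keys p" and F: "F \<subseteq> Poly_Mapping.keys p" by auto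
    have "P (Poly_Mapping.single x (Poly_Mapping.lookup p x) + (\<Sum>w\<in>F. Poly_Mapping.single w (Poly_Mapping.lookup p w)))"
      using assms(2)[OF x] insert.IH[OF F] by (rule assms(3))
    then show ?case by (simp only: sum.insert[OF insert.hyps])
  qed
  then have "P (\<Sum>w\<in>Poly_Mapping.keys p. Poly_Mapping.single w (Poly_Mapping.lookup p w))"
    by simp
  then show ?thesis by (subst pm_expand)
qed

fun wmap :: "('g \<Rightarrow> ('h,'k::semiring_1) freealg) \<Rightarrow> 'g word \<Rightarrow> ('h,'k) freealg" where
  "wmap f (Word xs) = prod_list (map f xs)"

definition hom :: "('g \<Rightarrow> ('h,'k::semiring_1) freealg) \<Rightarrow> ('g,'k) freealg \<Rightarrow> ('h,'k) freealg" where
  "hom f p = (\<Sum>w\<in>Poly_Mapping.keys p. scal (Poly_Mapping.lookup p w) * wmap f w)"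

lemma wmap_plus: "wmap f (u + v) = wmap f u * wmap f v"
  by (cases u; cases v) simp

lemma wmap_0: "wmap f 0 = 1" by (simp add: zero_word_def)

lemma scal_0[simp]: "scal 0 = 0" by (simp add: scal_def)
lemma scal_1[simp]: "scal 1 = 1" by (simp add: scal_def word0)
lemma scal_add: "scal (a + b) = scal a + scal b" by (simp add: scal_def single_add)
lemma scal_mult: "scal a * scal b = scal (a * b)" by (simp add: scal_def mult_single word0)

lemma scal_central: "scal (c::'k::comm_semiring_1) * x = x * scal c"
proof (induction x rule: pm_induct)
  case zero then show ?case by simp
next
  case (single w d) then show ?case by (simp add: scal_def mult_single word0 mult.commute)
next
  case (add a b) then show ?case by (simp add: distrib_left distrib_right)
qed

lemma hom_single: "hom f (Poly_Mapping.single w c) = scal c * wmap f w"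
  by (cases "c = 0") (simp_all add: hom_def)

lemma hom_zero[simp]: "hom f 0 = 0" by (simp add: hom_def)

lemma hom_add: "hom f (x + y) = hom f x + hom f y"
  unfolding hom_def
  by (rule setsum_keys_plus_distrib) (simp_all add: scal_add distrib_right)

lemma hom_diff: "hom f (x - y) = hom f x - (hom f y :: ('h,'k::comm_ring_1) freealg)"
proof -
  have "hom f x = hom f (x - y) + hom f y" using hom_add[of f "x - y" y] by simp
  then show ?thesis by (simp add: algebra_simps)
qed

lemma hom_uminus: "hom f (- y) = - (hom f y :: ('h,'k::comm_ring_1) freealg)"
  using hom_diff[of f 0 y] by simp

lemma hom_sum: "hom f (sum g A) = (\<Sum>a\<in>A. hom f (g a))"
  by (induction A rule: infinite_finite_induct) (simp_all add: hom_add)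

lemma hom_mult: "hom f (x * y) = hom f x * (hom f y :: ('h,'k::comm_semiring_1) freealg)"
proof (induction x rule: pm_induct)
  case zero then show ?case by simp
next
  case (single u a)
  show ?case
  proof (induction y rule: pm_induct)
    case zero then show ?case by simp
  next
    case (single v b)
    have "hom f (Poly_Mapping.single u a * Poly_Mapping.single v b) = scal (a*b) * (wmap f u * wmap f v)"
      by (simp add: mult_single hom_single wmap_plus)
    also have "\<dots> = scal a * (scal b * wmap f u) * wmap f v"
      by (simp only: mult.assoc scal_mult[symmetric])
    also have "\<dots> = scal a * (wmap f u * scal b) * wmap f v"
      by (simp only: scal_central[of b "wmap f u"])
    also have "\<dots> = (scal a * wmap f u) * (scal b * wmap f v)"
      by (simp only: mult.assoc)
    finally show ?case by (simp add: hom_single)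
  next
    case (add a b) then show ?case by (simp add: distrib_left hom_add)
  qed
next
  case (add a b) then show ?case by (simp add: distrib_right hom_add)
qed

lemma hom_gen[simp]: "hom f (gen g) = (f g :: ('h,'k::comm_semiring_1) freealg)"
  by (simp add: gen_def hom_single)

lemma hom_one[simp]: "hom f 1 = (1 :: ('h,'k::comm_semiring_1) freealg)"
proof -
  have "hom f (Poly_Mapping.single 0 1) = (scal 1 * wmap f 0 :: ('h,'k) freealg)" by (rule hom_single)
  then show ?thesis by (simp add: wmap_0)
qed

lemma hom_scal[simp]: "hom f (scal c) = (scal c :: ('h,'k::comm_semiring_1) freealg)"
  by (simp add: scal_def hom_single word0 wmap_0)

lemma wmap_gen: "wmap gen (Word xs) = (Poly_Mapping.single (Word xs) 1 :: ('h,'k::semiring_1) freealg)"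
proof (induction xs)
  case Nil then show ?case using wmap_0 by (simp add: word0)
next
  case (Cons x xs)
  have "wmap gen (Word (x # xs)) = (gen x * wmap gen (Word xs) :: ('h,'k) freealg)" by simp
  also have "\<dots> = Poly_Mapping.single (Word [x]) 1 * Poly_Mapping.single (Word xs) 1"
    by (subst Cons.IH) (simp add: gen_def)
  also have "\<dots> = Poly_Mapping.single (Word [x] + Word xs) 1" by (simp only: mult_single mult_1)
  finally show ?case by simp
qed

lemma hom_gen_id: "hom gen p = (p :: ('h,'k::comm_semiring_1) freealg)"
proof (induction p rule: pm_induct)
  case zero then show ?case by simp
next
  case (single w c)
  then show ?case by (cases w) (simp add: hom_single wmap_gen scal_def mult_single word0 del: wmap.simps)
next
  case (add a b) then show ?case by (simp add: hom_add)
qed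

lemma hom_wmap: "hom g (wmap f w) = wmap (hom g \<circ> f) (w :: 'a word)"
  for g :: "'b \<Rightarrow> ('c,'k::comm_semiring_1) freealg"
proof (cases w)
  case (Word xs) then show ?thesis by (induction xs arbitrary: w) (simp_all add: hom_mult)
qed

lemma hom_comp: "hom g (hom f p) = hom (hom g \<circ> f) p"
  for g :: "'b \<Rightarrow> ('c,'k::comm_semiring_1) freealg"
proof (induction p rule: pm_induct)
  case zero then show ?case by simp
next
  case (single w c) then show ?case by (simp add: hom_single hom_mult hom_wmap comp_def)
next
  case (add a b) then show ?case by (simp add: hom_add)
qed

lemma over_0[simp]: "over G 0" by (simp add: over_def)
lemma over_single: "set (letters w) \<subseteq> G \<Longrightarrow> over G (Poly_Mapping.single w c)"
  by (simp add: over_def)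
lemma over_1[simp]: "over G 1" by (simp add: over_def word0[symmetric])
lemma over_scal[simp]: "over G (scal c)" by (simp add: over_def scal_def)
lemma over_gen: "g \<in> G \<Longrightarrow> over G (gen g)" by (simp add: over_def gen_def)
lemma over_add:
  assumes "over G x" "over G y" shows "over G (x + y)"
  unfolding over_def
proof
  fix w assume "w \<in> Poly_Mapping.keys (x + y)"
  then have "w \<in> Poly_Mapping.keys x \<or> w \<in> Poly_Mapping.keys y" using keys_add[of x y] by blast
  then show "set (letters w) \<subseteq> G" using assms unfolding over_def by blast
qed
lemma over_uminus: "over G x \<Longrightarrow> over G (- x :: ('g,'k::ab_group_add) freealg)"
  unfolding over_def by simp
lemma over_diff: "over G x \<Longrightarrow> over G y \<Longrightarrow> over G (x - y :: ('g,'k::ab_group_add) freealg)"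
  unfolding diff_conv_add_uminus by (intro over_add over_uminus)
lemma letters_plus: "letters (a + b) = letters a @ letters b" by (cases a; cases b) simp
lemma over_mult:
  assumes "over G x" "over G y" shows "over G (x * y)"
  unfolding over_def
proof
  fix w assume "w \<in> Poly_Mapping.keys (x * y)"
  then obtain a b where ab: "a \<in> Poly_Mapping.keys x" "b \<in> Poly_Mapping.keys y" "w = a + b"
    using keys_mult[of x y] by blast
  have "set (letters a) \<subseteq> G" "set (letters b) \<subseteq> G" using assms ab unfolding over_def by blast+
  then show "set (letters w) \<subseteq> G" using ab(3) by (simp add: letters_plus)
qed
lemma over_sum: "(\<And>a. a \<in> A \<Longrightarrow> over G (f a)) \<Longrightarrow> over G (sum f A)"
  by (induction A rule: infinite_finite_induct) (simp_all add: over_add)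
lemma over_prod_list: "(\<forall>g\<in>set xs. over H (f g)) \<Longrightarrow> over H (prod_list (map f xs))"
  by (induction xs) (simp_all add: over_mult)
lemma over_wmap: "(\<And>g. g \<in> set (letters w) \<Longrightarrow> over H (f g)) \<Longrightarrow> over H (wmap f w)"
  by (cases w) (simp add: over_prod_list)

lemma over_hom:
  assumes op: "over G p" and fg: "\<And>g. g \<in> G \<Longrightarrow> over H (f g)"
  shows "over H (hom f p)"
  unfolding hom_def
proof (intro over_sum over_mult over_scal over_wmap)
  fix w g assume w: "w \<in> Poly_Mapping.keys p" and g: "g \<in> set (letters w)"
  have "g \<in> G" using op w g unfolding over_def by blast
  then show "over H (f g)" by (rule fg)
qed

lemma hom_cong:
  assumes op: "over G p" and fg: "\<And>g. g \<in> G \<Longrightarrow> f g = f' g"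
  shows "hom f p = hom f' p"
  unfolding hom_def
proof (intro sum.cong refl arg_cong2[where f="(*)"])
  fix w assume w: "w \<in> Poly_Mapping.keys p"
  obtain xs where xs: "w = Word xs" by (cases w)
  have "set (letters w) \<subseteq> G" using op w unfolding over_def by blast
  then have "set xs \<subseteq> G" using xs by simp
  then have "\<forall>x\<in>set xs. f x = f' x" using fg by blast
  then have m: "map f xs = map f' xs" by simp
  show "wmap f w = wmap f' w" by (simp only: xs wmap.simps m)
qed

lemma nonunital_keys: "nonunital x \<longleftrightarrow> Word [] \<notin> Poly_Mapping.keys x"
  by (simp add: nonunital_def in_keys_iff)
lemma nonunital_0[simp]: "nonunital 0" by (simp add: nonunital_def)
lemma nonunital_add: "nonunital x \<Longrightarrow> nonunital y \<Longrightarrow> nonunital (x + y)"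
  by (simp add: nonunital_def lookup_add)
lemma nonunital_uminus: "nonunital x \<Longrightarrow> nonunital (- x)"
  by (simp add: nonunital_def)
lemma nonunital_diff: "nonunital x \<Longrightarrow> nonunital y \<Longrightarrow> nonunital (x - y)"
  by (simp add: nonunital_def lookup_minus)
lemma nonunital_sum: "(\<And>a. a \<in> A \<Longrightarrow> nonunital (f a)) \<Longrightarrow> nonunital (sum f A)"
  by (induction A rule: infinite_finite_induct) (auto intro: nonunital_add)
lemma word_plus_empty: "a + b = Word [] \<Longrightarrow> a = Word [] \<and> b = Word []"
  by (cases a; cases b) simp
lemma nonunital_multL:
  assumes "nonunital x" shows "nonunital (x * y)"
  unfolding nonunital_keys
proof
  assume "Word [] \<in> Poly_Mapping.keys (x * y)"
  then obtain a b where ab: "a \<in> Poly_Mapping.keys x" "b \<in> Poly_Mapping.keys y" "a + b = Word []"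
    using keys_mult[of x y] by auto
  then have "a = Word []" using word_plus_empty[OF ab(3)] by simp
  then show False using assms ab(1) by (simp add: nonunital_keys)
qed
lemma nonunital_multR:
  assumes "nonunital y" shows "nonunital (x * y)"
  unfolding nonunital_keys
proof
  assume "Word [] \<in> Poly_Mapping.keys (x * y)"
  then obtain a b where ab: "a \<in> Poly_Mapping.keys x" "b \<in> Poly_Mapping.keys y" "a + b = Word []"
    using keys_mult[of x y] by auto
  then have "b = Word []" using word_plus_empty[OF ab(3)] by simp
  then show False using assms ab(2) by (simp add: nonunital_keys)
qed
lemma nonunital_gen: "nonunital (gen g)" by (simp add: nonunital_def gen_def lookup_single)
lemma nonunital_hom:
  assumes o: "over G p" and n: "nonunital p" and f: "\<And>g. g \<in> G \<Longrightarrow> nonunital (f g)"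
  shows "nonunital (hom f p)"
  unfolding hom_def
proof (intro nonunital_sum nonunital_multR)
  fix w assume w: "w \<in> Poly_Mapping.keys p"
  obtain xs where xs: "w = Word xs" by (cases w)
  have "w \<noteq> Word []" using n w by (auto simp: nonunital_keys)
  then obtain x ys where xys: "xs = x # ys" using xs by (cases xs) auto
  have "set (letters w) \<subseteq> G" using o w unfolding over_def by blast
  then have "x \<in> G" using xs xys by simp
  then have "nonunital (f x * prod_list (map f ys))" by (intro nonunital_multL f)
  then show "nonunital (wmap f w)" using xs xys by simp
qed

section \<open>ideals\<close>

lemma gideal_R: "r \<in> R \<Longrightarrow> r \<in> gideal G R"
  using gideal.gen[of r R G 1 1] by simp
lemma gideal_uminus: "x \<in> gideal G R \<Longrightarrow> - x \<in> gideal G R"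
proof (induction rule: gideal.induct)
  case zero then show ?case by (simp add: gideal.zero)
next
  case (gen r a b)
  then have "(- a) * r * b \<in> gideal G R" by (intro gideal.gen over_uminus)
  then show ?case by simp
next
  case (add x y)
  have "-(x+y) = -x + -y" by simp
  then show ?case using gideal.add[OF add.IH(1) add.IH(2)] by simp
qed
lemma gideal_diff: "x \<in> gideal G R \<Longrightarrow> y \<in> gideal G R \<Longrightarrow> x - y \<in> gideal G R"
  unfolding diff_conv_add_uminus by (intro gideal.add gideal_uminus)
lemma gideal_multL: "x \<in> gideal G R \<Longrightarrow> over G c \<Longrightarrow> c * x \<in> gideal G R"
proof (induction rule: gideal.induct)
  case zero then show ?case by (simp add: gideal.zero)
next
  case (gen r a b)
  then have "(c * a) * r * b \<in> gideal G R" by (intro gideal.gen over_mult)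
  then show ?case by (simp add: mult.assoc)
next
  case (add x y) then show ?case by (simp add: distrib_left gideal.add)
qed
lemma gideal_multR: "x \<in> gideal G R \<Longrightarrow> over G c \<Longrightarrow> x * c \<in> gideal G R"
proof (induction rule: gideal.induct)
  case zero then show ?case by (simp add: gideal.zero)
next
  case (gen r a b)
  then have "a * r * (b * c) \<in> gideal G R" by (intro gideal.gen over_mult)
  then show ?case by (simp add: mult.assoc)
next
  case (add x y) then show ?case by (simp add: distrib_right gideal.add)
qed
lemma gideal_sum: "(\<And>a. a \<in> A \<Longrightarrow> f a \<in> gideal G R) \<Longrightarrow> sum f A \<in> gideal G R"
  by (induction A rule: infinite_finite_induct) (auto intro: gideal.add gideal.zero)

lemma hom_gideal:
  fixes f :: "'g \<Rightarrow> ('h,'k::comm_ring_1) freealg"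
  assumes "\<And>g. g \<in> G \<Longrightarrow> over H (f g)" "\<And>r. r \<in> R \<Longrightarrow> hom f r \<in> gideal H Q"
    and "x \<in> gideal G R"
  shows "hom f x \<in> gideal H Q"
  using assms(3)
proof (induction rule: gideal.induct)
  case zero then show ?case by (simp add: gideal.zero)
next
  case (gen r a b)
  then show ?case using assms by (simp add: hom_mult gideal_multL gideal_multR over_hom)
next
  case (add x y) then show ?case by (simp add: hom_add gideal.add)
qed

lemma wmap_close:
  fixes h :: "'g \<Rightarrow> ('g,'k::comm_ring_1) freealg"
  assumes hh: "\<And>g. g \<in> H \<Longrightarrow> over H (h g) \<and> h g - gen g \<in> gideal H Q"
  shows "set xs \<subseteq> H \<Longrightarrow> wmap h (Word xs) - wmap gen (Word xs) \<in> gideal H Q"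
proof (induction xs)
  case Nil then show ?case by (simp add: gideal.zero)
next
  case (Cons x xs)
  have xH: "x \<in> H" and sH: "set xs \<subseteq> H" using Cons.prems by auto
  have eq: "wmap h (Word (x#xs)) - wmap gen (Word (x#xs)) =
     (h x - gen x) * wmap h (Word xs) + gen x * (wmap h (Word xs) - wmap gen (Word xs))"
    by (simp add: algebra_simps)
  have o: "over H (wmap h (Word xs))" using sH hh by (intro over_wmap) auto
  have a: "(h x - gen x) * wmap h (Word xs) \<in> gideal H Q"
    using hh[OF xH] o by (intro gideal_multR) auto
  have b: "gen x * (wmap h (Word xs) - wmap gen (Word xs)) \<in> gideal H Q"
    using Cons.IH[OF sH] over_gen[OF xH] by (rule gideal_multL)
  show ?case unfolding eq using a b by (rule gideal.add)
qed

lemma hom_close: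
  fixes h :: "'g \<Rightarrow> ('g,'k::comm_ring_1) freealg"
  assumes hh: "\<And>g. g \<in> H \<Longrightarrow> over H (h g) \<and> h g - gen g \<in> gideal H Q" and oy: "over H y"
  shows "hom h y - y \<in> gideal H Q"
proof -
  have "hom h y - hom gen y \<in> gideal H Q"
    unfolding hom_def sum_subtractf[symmetric] right_diff_distrib[symmetric]
  proof (intro gideal_sum gideal_multL over_scal)
    fix w assume w: "w \<in> Poly_Mapping.keys y"
    obtain xs where xs: "w = Word xs" by (cases w)
    have "set (letters w) \<subseteq> H" using oy w unfolding over_def by blast
    then have "set xs \<subseteq> H" using xs by simp
    then show "wmap h w - wmap gen w \<in> gideal H Q"
      unfolding xs using wmap_close[OF hh] by blast
  qed
  then show ?thesis by (simp add: hom_gen_id)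
qed


lemma graph_facts:
  assumes sg: "separated_graph V Ed s r C"
  shows "\<And>e. e \<in> Ed \<Longrightarrow> s e \<in> V \<and> r e \<in> V"
    and "\<And>X. X \<in> C \<Longrightarrow> \<exists>v\<in>V. X \<in> Cv s C v"
    and "\<And>X. X \<in> C \<Longrightarrow> X \<subseteq> Ed"
    and "\<And>e. e \<in> Ed \<Longrightarrow> \<exists>X\<in>C. e \<in> X"
proof -
  have a: "\<forall>e\<in>Ed. s e \<in> V \<and> r e \<in> V" and b: "C = (\<Union>v\<in>V. Cv s C v)"
    and c: "\<forall>v\<in>V. \<Union>(Cv s C v) = {e\<in>Ed. s e = v}"
    using sg unfolding separated_graph_def by auto
  show "\<And>e. e \<in> Ed \<Longrightarrow> s e \<in> V \<and> r e \<in> V" using a by auto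
  show "\<And>X. X \<in> C \<Longrightarrow> \<exists>v\<in>V. X \<in> Cv s C v" using b by blast
  show "\<And>X. X \<in> C \<Longrightarrow> X \<subseteq> Ed"
  proof -
    fix X assume "X \<in> C"
    then obtain v where "v \<in> V" "X \<in> Cv s C v" using b by blast
    then show "X \<subseteq> Ed" using c by blast
  qed
  show "\<And>e. e \<in> Ed \<Longrightarrow> \<exists>X\<in>C. e \<in> X"
  proof -
    fix e assume "e \<in> Ed"
    then have "s e \<in> V" using a by auto
    then have "e \<in> \<Union>(Cv s C (s e))" using c \<open>e \<in> Ed\<close> by blast
    then show "\<exists>X\<in>C. e \<in> X" unfolding Cv_def by blast
  qed
qed

definition fP :: "'e set \<Rightarrow> ('v,'e) lgen \<Rightarrow> (('v,'e) agen,'k::field) freealg" where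
  "fP X0 g = (case g of LV v \<Rightarrow> gen (AV X0 v) | LE e \<Rightarrow> gen (AE e) | LS e \<Rightarrow> gen (AS e))"
definition fQ :: "('v,'e) agen \<Rightarrow> (('v,'e) lgen,'k::field) freealg" where
  "fQ g = (case g of AV X v \<Rightarrow> gen (LV v) | AE e \<Rightarrow> gen (LE e) | AS e \<Rightarrow> gen (LS e))"

lemma fP_simps[simp]: "fP X0 (LV v) = gen (AV X0 v)" "fP X0 (LE e) = gen (AE e)" "fP X0 (LS e) = gen (AS e)"
  by (simp_all add: fP_def)
lemma fQ_simps[simp]: "fQ (AV X v) = gen (LV v)" "fQ (AE e) = gen (LE e)" "fQ (AS e) = gen (LS e)"
  by (simp_all add: fQ_def)

lemma AXm1: "v \<in> V \<Longrightarrow> w \<in> V \<Longrightarrow> gen (AV X v) * gen (AV X w) - (if v = w then gen (AV X v) else 0) \<in> (AX_rels V s r S X :: (('v,'e) agen,'k::field) freealg set)"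
  unfolding AX_rels_def by (rule UnI1, rule UnI1, rule UnI1, rule UnI1, rule UnI1, rule UnI1, blast)
lemma AXm2: "e \<in> X \<Longrightarrow> gen (AE e) * gen (AV X (r e)) - gen (AE e) \<in> (AX_rels V s r S X :: (('v,'e) agen,'k::field) freealg set)"
  unfolding AX_rels_def by (rule UnI1, rule UnI1, rule UnI1, rule UnI1, rule UnI1, rule UnI2, blast)
lemma AXm3: "e \<in> X \<Longrightarrow> gen (AV X (s e)) * gen (AE e) - gen (AE e) \<in> (AX_rels V s r S X :: (('v,'e) agen,'k::field) freealg set)"
  unfolding AX_rels_def by (rule UnI1, rule UnI1, rule UnI1, rule UnI1, rule UnI2, blast)
lemma AXm4: "e \<in> X \<Longrightarrow> gen (AV X (r e)) * gen (AS e) - gen (AS e) \<in> (AX_rels V s r S X :: (('v,'e) agen,'k::field) freealg set)"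
  unfolding AX_rels_def by (rule UnI1, rule UnI1, rule UnI1, rule UnI2, blast)
lemma AXm5: "e \<in> X \<Longrightarrow> gen (AS e) * gen (AV X (s e)) - gen (AS e) \<in> (AX_rels V s r S X :: (('v,'e) agen,'k::field) freealg set)"
  unfolding AX_rels_def by (rule UnI1, rule UnI1, rule UnI2, blast)
lemma AXm6: "e \<in> X \<Longrightarrow> f \<in> X \<Longrightarrow> gen (AS e) * gen (AE f) - (if e = f then gen (AV X (r e)) else 0) \<in> (AX_rels V s r S X :: (('v,'e) agen,'k::field) freealg set)"
  unfolding AX_rels_def by (rule UnI1, rule UnI2, blast)
lemma AXm7: "X \<in> S \<Longrightarrow> \<forall>e\<in>X. s e = v \<Longrightarrow> gen (AV X v) - (\<Sum>e\<in>X. gen (AE e) * gen (AS e)) \<in> (AX_rels V s r S X :: (('v,'e) agen,'k::field) freealg set)"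
  unfolding AX_rels_def by (rule UnI2, blast)
lemma Lm1: "v \<in> V \<Longrightarrow> w \<in> V \<Longrightarrow> gen (LV v) * gen (LV w) - (if v = w then gen (LV v) else 0) \<in> (L_rels V Ed s r C S :: (('v,'e) lgen,'k::field) freealg set)"
  unfolding L_rels_def by (rule UnI1, rule UnI1, rule UnI1, rule UnI1, rule UnI1, rule UnI1, blast)
lemma Lm2: "e \<in> Ed \<Longrightarrow> gen (LV (s e)) * gen (LE e) - gen (LE e) \<in> (L_rels V Ed s r C S :: (('v,'e) lgen,'k::field) freealg set)"
  unfolding L_rels_def by (rule UnI1, rule UnI1, rule UnI1, rule UnI1, rule UnI1, rule UnI2, blast)
lemma Lm3: "e \<in> Ed \<Longrightarrow> gen (LE e) * gen (LV (r e)) - gen (LE e) \<in> (L_rels V Ed s r C S :: (('v,'e) lgen,'k::field) freealg set)"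
  unfolding L_rels_def by (rule UnI1, rule UnI1, rule UnI1, rule UnI1, rule UnI2, blast)
lemma Lm4: "e \<in> Ed \<Longrightarrow> gen (LV (r e)) * gen (LS e) - gen (LS e) \<in> (L_rels V Ed s r C S :: (('v,'e) lgen,'k::field) freealg set)"
  unfolding L_rels_def by (rule UnI1, rule UnI1, rule UnI1, rule UnI2, blast)
lemma Lm5: "e \<in> Ed \<Longrightarrow> gen (LS e) * gen (LV (s e)) - gen (LS e) \<in> (L_rels V Ed s r C S :: (('v,'e) lgen,'k::field) freealg set)"
  unfolding L_rels_def by (rule UnI1, rule UnI1, rule UnI2, blast)
lemma Lm6: "Y \<in> C \<Longrightarrow> e \<in> Y \<Longrightarrow> f \<in> Y \<Longrightarrow> gen (LS e) * gen (LE f) - (if e = f then gen (LV (r e)) else 0) \<in> (L_rels V Ed s r C S :: (('v,'e) lgen,'k::field) freealg set)"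
  unfolding L_rels_def by (rule UnI1, rule UnI2, blast)
lemma Lm7: "v \<in> V \<Longrightarrow> X \<in> S \<Longrightarrow> X \<in> Cv s C v \<Longrightarrow> gen (LV v) - (\<Sum>e\<in>X. gen (LE e) * gen (LS e)) \<in> (L_rels V Ed s r C S :: (('v,'e) lgen,'k::field) freealg set)"
  unfolding L_rels_def by (rule UnI2, blast)

lemma rels_dummy: "True" by simp
lemma rels_P:
  fixes V :: "'v set" and Ed :: "'e set" and q :: "(('v,'e) lgen,'k::field) freealg"
  assumes sg: "separated_graph V Ed s r C" and X0: "X0 \<in> C" and SC: "S \<subseteq> {X\<in>C. finite X}"
    and rr: "q \<in> L_rels V Ed s r C S"
  shows "hom (fP X0) q \<in> gideal (A_gens V C) (A_rels V s r C S \<union> I_gens V C)"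
proof -
  note gf = graph_facts[OF sg]
  let ?H = "A_gens V C" and ?Q = "A_rels V s r C S \<union> I_gens V C :: (('v,'e) agen,'k) freealg set"
  have AX: "\<And>X x. X \<in> C \<Longrightarrow> x \<in> AX_rels V s r S X \<Longrightarrow> x \<in> gideal ?H ?Q"
    by (rule gideal_R) (auto simp: A_rels_def)
  have IG: "\<And>X Y v. X \<in> C \<Longrightarrow> Y \<in> C \<Longrightarrow> v \<in> V \<Longrightarrow> gen (AV X v) - gen (AV Y v) \<in> gideal ?H ?Q"
    by (rule gideal_R) (auto simp: I_gens_def)
  have oE: "\<And>e X. X \<in> C \<Longrightarrow> e \<in> X \<Longrightarrow> over ?H (gen (AE e)) \<and> over ?H (gen (AS e))"
    by (auto intro!: over_gen simp: A_gens_def AX_gens_def)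
  from rr consider
      (c1) v w where "v \<in> V" "w \<in> V" "q = gen (LV v) * gen (LV w) - (if v = w then gen (LV v) else 0)"
    | (c2) e where "e \<in> Ed" "q = gen (LV (s e)) * gen (LE e) - gen (LE e)"
    | (c3) e where "e \<in> Ed" "q = gen (LE e) * gen (LV (r e)) - gen (LE e)"
    | (c4) e where "e \<in> Ed" "q = gen (LV (r e)) * gen (LS e) - gen (LS e)"
    | (c5) e where "e \<in> Ed" "q = gen (LS e) * gen (LV (s e)) - gen (LS e)"
    | (c6) e f Y where "Y \<in> C" "e \<in> Y" "f \<in> Y" "q = gen (LS e) * gen (LE f) - (if e = f then gen (LV (r e)) else 0)"
    | (c7) v X where "v \<in> V" "X \<in> S" "X \<in> Cv s C v" "q = gen (LV v) - (\<Sum>e\<in>X. gen (LE e) * gen (LS e))"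
    unfolding L_rels_def by blast
  then show ?thesis
  proof cases
    case c1
    have "hom (fP X0) q = gen (AV X0 v) * gen (AV X0 w) - (if v = w then gen (AV X0 v) else 0)"
      unfolding c1(3) by (cases "v = w") (simp_all add: hom_mult hom_diff)
    also have "\<dots> \<in> gideal ?H ?Q" by (rule AX[OF X0 AXm1[OF c1(1,2)]])
    finally show ?thesis .
  next
    case c2
    obtain X where X: "X \<in> C" "e \<in> X" using gf(4) c2 by blast
    have "hom (fP X0) q = (gen (AV X0 (s e)) - gen (AV X (s e))) * gen (AE e)
        + (gen (AV X (s e)) * gen (AE e) - gen (AE e))"
      unfolding c2(2) by (simp add: hom_mult hom_diff algebra_simps)
    also have "\<dots> \<in> gideal ?H ?Q" using c2 X X0 gf(1)[of e] oE[OF X]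
      by (intro gideal.add gideal_multR IG AX[of X]) (auto intro: AXm2 AXm3 AXm4 AXm5)
    finally show ?thesis .
  next
    case c3
    obtain X where X: "X \<in> C" "e \<in> X" using gf(4) c3 by blast
    have "hom (fP X0) q = gen (AE e) * (gen (AV X0 (r e)) - gen (AV X (r e)))
        + (gen (AE e) * gen (AV X (r e)) - gen (AE e))"
      unfolding c3(2) by (simp add: hom_mult hom_diff algebra_simps)
    also have "\<dots> \<in> gideal ?H ?Q" using c3 X X0 gf(1)[of e] oE[OF X]
      by (intro gideal.add gideal_multL IG AX[of X]) (auto intro: AXm2 AXm3 AXm4 AXm5)
    finally show ?thesis .
  next
    case c4
    obtain X where X: "X \<in> C" "e \<in> X" using gf(4) c4 by blast
    have "hom (fP X0) q = (gen (AV X0 (r e)) - gen (AV X (r e))) * gen (AS e)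
        + (gen (AV X (r e)) * gen (AS e) - gen (AS e))"
      unfolding c4(2) by (simp add: hom_mult hom_diff algebra_simps)
    also have "\<dots> \<in> gideal ?H ?Q" using c4 X X0 gf(1)[of e] oE[OF X]
      by (intro gideal.add gideal_multR IG AX[of X]) (auto intro: AXm2 AXm3 AXm4 AXm5)
    finally show ?thesis .
  next
    case c5
    obtain X where X: "X \<in> C" "e \<in> X" using gf(4) c5 by blast
    have "hom (fP X0) q = gen (AS e) * (gen (AV X0 (s e)) - gen (AV X (s e)))
        + (gen (AS e) * gen (AV X (s e)) - gen (AS e))"
      unfolding c5(2) by (simp add: hom_mult hom_diff algebra_simps)
    also have "\<dots> \<in> gideal ?H ?Q" using c5 X X0 gf(1)[of e] oE[OF X]
      by (intro gideal.add gideal_multL IG AX[of X]) (auto intro: AXm2 AXm3 AXm4 AXm5)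
    finally show ?thesis .
  next
    case c6
    have eE: "e \<in> Ed" using c6 gf(3) by blast
    show ?thesis
    proof (cases "e = f")
      case True
      have "hom (fP X0) q = (gen (AS e) * gen (AE f) - (if e = f then gen (AV Y (r e)) else 0))
         + (gen (AV Y (r e)) - gen (AV X0 (r e)))"
        using True unfolding c6(4) by (simp add: hom_mult hom_diff algebra_simps)
      also have "\<dots> \<in> gideal ?H ?Q"
        by (rule gideal.add[OF AX[OF c6(1) AXm6[OF c6(2,3)]] IG[OF c6(1) X0 gf(1)[OF eE, THEN conjunct2]]])
      finally show ?thesis .
    next
      case False
      have "hom (fP X0) q = (gen (AS e) * gen (AE f) - (if e = f then gen (AV Y (r e)) else 0))"
        using False unfolding c6(4) by (simp add: hom_mult hom_diff)
      also have "\<dots> \<in> gideal ?H ?Q"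
        by (rule AX[OF c6(1) AXm6[OF c6(2,3)]])
      finally show ?thesis .
    qed
  next
    case c7
    have XC: "X \<in> C" using c7 SC by blast
    have src: "\<forall>e\<in>X. s e = v" using c7 by (auto simp: Cv_def)
    have "hom (fP X0) q = (gen (AV X0 v) - gen (AV X v))
        + (gen (AV X v) - (\<Sum>e\<in>X. gen (AE e) * gen (AS e)))"
      unfolding c7(4) by (simp add: hom_mult hom_diff hom_sum)
    also have "\<dots> \<in> gideal ?H ?Q" using c7 X0 XC src
      by (intro gideal.add IG AX[of X]) (auto intro: AXm7)
    finally show ?thesis .
  qed
qed


lemma rels_Q:
  fixes V :: "'v set" and Ed :: "'e set" and q :: "(('v,'e) agen,'k::field) freealg"
  assumes sg: "separated_graph V Ed s r C"
    and qq: "q \<in> A_rels V s r C S \<union> I_gens V C"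
  shows "hom fQ q \<in> gideal (L_gens V Ed) (L_rels V Ed s r C S :: (('v,'e) lgen,'k::field) freealg set)"
proof -
  note gf = graph_facts[OF sg]
  let ?G = "L_gens V Ed" and ?R = "L_rels V Ed s r C S :: (('v,'e) lgen,'k) freealg set"
  have LR: "\<And>x. x \<in> ?R \<Longrightarrow> x \<in> gideal ?G ?R" by (rule gideal_R)
  show ?thesis
  proof (cases "q \<in> I_gens V C")
    case True
    then obtain X Y v where "q = gen (AV X v) - gen (AV Y v)" unfolding I_gens_def by blast
    then show ?thesis by (simp add: hom_diff gideal.zero)
  next
    case False
    then obtain X where XC: "X \<in> C" and qX: "q \<in> AX_rels V s r S X"
      using qq unfolding A_rels_def by blast
    have XE: "X \<subseteq> Ed" using gf(3) XC .
    from qX consider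
      (c1) v w where "v \<in> V" "w \<in> V" "q = gen (AV X v) * gen (AV X w) - (if v = w then gen (AV X v) else 0)"
    | (c2) e where "e \<in> X" "q = gen (AE e) * gen (AV X (r e)) - gen (AE e)"
    | (c3) e where "e \<in> X" "q = gen (AV X (s e)) * gen (AE e) - gen (AE e)"
    | (c4) e where "e \<in> X" "q = gen (AV X (r e)) * gen (AS e) - gen (AS e)"
    | (c5) e where "e \<in> X" "q = gen (AS e) * gen (AV X (s e)) - gen (AS e)"
    | (c6) e f where "e \<in> X" "f \<in> X" "q = gen (AS e) * gen (AE f) - (if e = f then gen (AV X (r e)) else 0)"
    | (c7) v where "X \<in> S" "\<forall>e\<in>X. s e = v" "q = gen (AV X v) - (\<Sum>e\<in>X. gen (AE e) * gen (AS e))"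
      unfolding AX_rels_def by blast
    then show ?thesis
    proof cases
      case c1
      have "hom fQ q = gen (LV v) * gen (LV w) - (if v = w then gen (LV v) else 0)"
        unfolding c1(3) by (cases "v = w") (simp_all add: hom_mult hom_diff)
      also have "\<dots> \<in> gideal ?G ?R" by (rule LR[OF Lm1[OF c1(1,2)]])
      finally show ?thesis .
    next
      case c2
      have "hom fQ q = gen (LE e) * gen (LV (r e)) - gen (LE e)"
        unfolding c2(2) by (simp add: hom_mult hom_diff)
      also have "\<dots> \<in> gideal ?G ?R" using c2 XE by (intro LR) (auto intro: Lm2 Lm3 Lm4 Lm5)
      finally show ?thesis .
    next
      case c3
      have "hom fQ q = gen (LV (s e)) * gen (LE e) - gen (LE e)"
        unfolding c3(2) by (simp add: hom_mult hom_diff)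
      also have "\<dots> \<in> gideal ?G ?R" using c3 XE by (intro LR) (auto intro: Lm2 Lm3 Lm4 Lm5)
      finally show ?thesis .
    next
      case c4
      have "hom fQ q = gen (LV (r e)) * gen (LS e) - gen (LS e)"
        unfolding c4(2) by (simp add: hom_mult hom_diff)
      also have "\<dots> \<in> gideal ?G ?R" using c4 XE by (intro LR) (auto intro: Lm2 Lm3 Lm4 Lm5)
      finally show ?thesis .
    next
      case c5
      have "hom fQ q = gen (LS e) * gen (LV (s e)) - gen (LS e)"
        unfolding c5(2) by (simp add: hom_mult hom_diff)
      also have "\<dots> \<in> gideal ?G ?R" using c5 XE by (intro LR) (auto intro: Lm2 Lm3 Lm4 Lm5)
      finally show ?thesis .
    next
      case c6
      have "hom fQ q = gen (LS e) * gen (LE f) - (if e = f then gen (LV (r e)) else 0)"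
        unfolding c6(3) by (cases "e = f") (simp_all add: hom_mult hom_diff)
      also have "\<dots> \<in> gideal ?G ?R" by (rule LR[OF Lm6[OF XC c6(1,2)]])
      finally show ?thesis .
    next
      case c7
      obtain v' where v': "v' \<in> V" "X \<in> Cv s C v'" using gf(2) XC by blast
      then obtain e where "e \<in> X" "s e = v'" unfolding Cv_def by blast
      then have vv: "v = v'" using c7 by auto
      have "hom fQ q = gen (LV v) - (\<Sum>e\<in>X. gen (LE e) * gen (LS e))"
        unfolding c7(3) by (simp add: hom_mult hom_diff hom_sum)
      also have "\<dots> \<in> gideal ?G ?R" using c7 v' vv by (intro LR) (auto intro: Lm7)
      finally show ?thesis .
    qed
  qed
qed

theorem proposition4p4:
  fixes V :: "'v set" and Ed :: "'e set" and s r :: "'e \<Rightarrow> 'v"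
    and C S :: "'e set set"
  assumes "separated_graph V Ed s r C"
    and "C \<noteq> {}"
    and "S \<subseteq> {X\<in>C. finite X}"
  shows "\<exists>\<Phi> :: (('v,'e) lgen,'k::field) freealg \<Rightarrow> (('v,'e) agen,'k) freealg.
           pres_iso (L_gens V Ed) (L_rels V Ed s r C S)
                    (A_gens V C) (A_rels V s r C S \<union> I_gens V C) \<Phi>
         \<and> (\<forall>e\<in>Ed. \<Phi> (gen (LE e)) - gen (AE e) \<in> gideal (A_gens V C) (A_rels V s r C S \<union> I_gens V C)
                  \<and> \<Phi> (gen (LS e)) - gen (AS e) \<in> gideal (A_gens V C) (A_rels V s r C S \<union> I_gens V C))
         \<and> (\<forall>v\<in>V. \<forall>X\<in>C. \<Phi> (gen (LV v)) - gen (AV X v) \<in> gideal (A_gens V C) (A_rels V s r C S \<union> I_gens V C))"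
proof -
  note sg = assms(1)
  note gf = graph_facts[OF sg]
  obtain X0 where X0: "X0 \<in> C" using assms(2) by blast
  let ?G = "L_gens V Ed" and ?R = "L_rels V Ed s r C S :: (('v,'e) lgen,'k) freealg set"
  let ?H = "A_gens V C" and ?Q = "A_rels V s r C S \<union> I_gens V C :: (('v,'e) agen,'k) freealg set"
  let ?P = "hom (fP X0) :: (('v,'e) lgen,'k) freealg \<Rightarrow> _"
  let ?Ps = "hom fQ :: (('v,'e) agen,'k) freealg \<Rightarrow> (('v,'e) lgen,'k) freealg"
  have IG: "\<And>X Y v. X \<in> C \<Longrightarrow> Y \<in> C \<Longrightarrow> v \<in> V \<Longrightarrow> gen (AV X v) - gen (AV Y v) \<in> gideal ?H ?Q"
    by (rule gideal_R) (auto simp: I_gens_def)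
  have oP: "\<And>g. g \<in> ?G \<Longrightarrow> over ?H (fP X0 g :: (('v,'e) agen,'k) freealg)"
  proof -
    fix g assume "g \<in> ?G"
    then show "over ?H (fP X0 g :: (('v,'e) agen,'k) freealg)"
    proof (cases g)
      case (LV v) then show ?thesis using \<open>g \<in> ?G\<close> X0
        by (auto intro!: over_gen simp: L_gens_def A_gens_def AX_gens_def)
    next
      case (LE e)
      then have "e \<in> Ed" using \<open>g \<in> ?G\<close> by (auto simp: L_gens_def)
      then obtain X where "X \<in> C" "e \<in> X" using gf(4) by blast
      then show ?thesis using LE by (auto intro!: over_gen simp: A_gens_def AX_gens_def)
    next
      case (LS e)
      then have "e \<in> Ed" using \<open>g \<in> ?G\<close> by (auto simp: L_gens_def)
      then obtain X where "X \<in> C" "e \<in> X" using gf(4) by blast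
      then show ?thesis using LS by (auto intro!: over_gen simp: A_gens_def AX_gens_def)
    qed
  qed
  have nP: "\<And>g. nonunital (fP X0 g :: (('v,'e) agen,'k) freealg)"
    by (case_tac g) (simp_all add: nonunital_gen)
  have oQ: "\<And>g. g \<in> ?H \<Longrightarrow> over ?G (fQ g :: (('v,'e) lgen,'k) freealg)"
  proof -
    fix g assume "g \<in> ?H"
    then obtain X where X: "X \<in> C" "g \<in> AX_gens V X" unfolding A_gens_def by blast
    then have "X \<subseteq> Ed" using gf(3) by blast
    then show "over ?G (fQ g :: (('v,'e) lgen,'k) freealg)" using X
      by (cases g) (auto intro!: over_gen simp: L_gens_def AX_gens_def)
  qed
  have nQ: "\<And>g. nonunital (fQ g :: (('v,'e) lgen,'k) freealg)"
    by (case_tac g) (simp_all add: nonunital_gen)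
  have PsP: "\<And>x. over ?G x \<Longrightarrow> ?Ps (?P x) = x"
  proof -
    fix x :: "(('v,'e) lgen,'k) freealg" assume ox: "over ?G x"
    have "?Ps (?P x) = hom (?Ps \<circ> fP X0) x" by (rule hom_comp)
    also have "\<dots> = hom gen x"
      by (rule hom_cong[OF ox]) (case_tac g; simp)
    finally show "?Ps (?P x) = x" by (simp add: hom_gen_id)
  qed
  have PPs: "\<And>y. over ?H y \<Longrightarrow> ?P (?Ps y) - y \<in> gideal ?H ?Q"
  proof -
    fix y :: "('v,'e) agen word \<Rightarrow>\<^sub>0 'k" assume oy: "over ?H y"
    have "?P (?Ps y) = hom (?P \<circ> fQ) y" by (rule hom_comp)
    moreover have "hom (?P \<circ> fQ) y - y \<in> gideal ?H ?Q"
    proof (rule hom_close[OF _ oy])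
      fix g assume gH: "g \<in> ?H"
      have "over ?H ((?P \<circ> fQ) g)" using oQ[OF gH] oP by (simp add: over_hom)
      moreover have "(?P \<circ> fQ) g - gen g \<in> gideal ?H ?Q"
      proof (cases g)
        case (AV X v)
        then have "X \<in> C" "v \<in> V" using gH by (auto simp: A_gens_def AX_gens_def)
        then show ?thesis using AV X0 IG by simp
      qed (simp_all add: gideal.zero)
      ultimately show "over ?H ((?P \<circ> fQ) g) \<and> (?P \<circ> fQ) g - gen g \<in> gideal ?H ?Q" by blast
    qed
    ultimately show "?P (?Ps y) - y \<in> gideal ?H ?Q" by simp
  qed
  have iso: "pres_iso ?G ?R ?H ?Q ?P"
    unfolding pres_iso_def
  proof (intro conjI allI impI)
    fix x :: "(('v,'e) lgen,'k) freealg" assume "over ?G x \<and> nonunital x"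
    then show "over ?H (?P x)" "nonunital (?P x)"
      using oP nP by (auto intro: over_hom nonunital_hom)
  next
    fix x y :: "(('v,'e) lgen,'k) freealg"
    show "?P (x + y) = ?P x + ?P y" by (rule hom_add)
    show "?P (x * y) - ?P x * ?P y \<in> gideal ?H ?Q" by (simp add: hom_mult gideal.zero)
  next
    fix c and x :: "(('v,'e) lgen,'k) freealg"
    show "?P (scal c * x) = scal c * ?P x" by (simp add: hom_mult)
  next
    fix x :: "(('v,'e) lgen,'k) freealg" assume ox: "over ?G x \<and> nonunital x"
    show "x \<in> gideal ?G ?R \<longleftrightarrow> ?P x \<in> gideal ?H ?Q"
    proof
      assume "x \<in> gideal ?G ?R"
      moreover note hg = hom_gideal[OF oP rels_P[OF sg X0 assms(3)]]
      ultimately show "?P x \<in> gideal ?H ?Q" by blast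
    next
      assume "?P x \<in> gideal ?H ?Q"
      moreover note hg2 = hom_gideal[OF oQ rels_Q[OF sg]]
      ultimately have "?Ps (?P x) \<in> gideal ?G ?R" by blast
      then show "x \<in> gideal ?G ?R" using PsP ox by simp
    qed
  next
    fix y :: "(('v,'e) agen,'k) freealg" assume oy: "over ?H y \<and> nonunital y"
    show "\<exists>x. over ?G x \<and> nonunital x \<and> ?P x - y \<in> gideal ?H ?Q"
      using oy oQ nQ PPs by (intro exI[of _ "?Ps y"]) (auto intro: over_hom nonunital_hom)
  qed
  show ?thesis
    using iso X0 IG by (intro exI[of _ ?P]) (auto simp: gideal.zero)
qed

end
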